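(* Let $\gamma:\mathbb{Z}_{\ge1}\to\mathbb{R}$ be a function with $\gamma(m)\ge m$ for all integers $m\ge 1$. Let $\lambda\ge 6$ be an integer such that $\gamma(\lambda)\le \frac12\lambda\log_2\lambda-\frac14\lambda$, and let $r$ be an integer with $2^{\gamma(\lambda)}\le r\le 2^{2\gamma(\lambda)}(1+\lambda^2)$ such that $p=r^{2^\lambda}+1$ is prime. Let $s=\log_2 p$ and let $\lambda'$ be the smallest integer with $2^{\lambda'}\ge\log_2 s$. Then there exists a power of two $\beta\ge1$ such that $$2\beta\log_2 r+\lambda-\log_2\beta\le 2\,\gamma(\lambda')\,2^{\lambda'}.$$
   Context: $\log_2$ denotes the logarithm in base $2$. A power of two means an integer $2^k$ with $k\ge 0$. *)

theory Defs
  imports Complex_Main "HOL-Computational_Algebra.Primes"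
begin

end

theory Submission
  imports Defs
begin

theorem proposition5p1:
  fixes \<gamma> :: "nat \<Rightarrow> real" and lam :: nat and r :: int
  assumes gamma_ge: "\<And>m. m \<ge> 1 \<Longrightarrow> \<gamma> m \<ge> real m"
    and lam_ge: "lam \<ge> 6"
    and gamma_lam: "\<gamma> lam \<le> real lam * log 2 (real lam) / 2 - real lam / 4"
    and r_lo: "2 powr \<gamma> lam \<le> real_of_int r"
    and r_hi: "real_of_int r \<le> 2 powr (2 * \<gamma> lam) * (1 + real lam ^ 2)"
    and p_prime: "prime (r ^ (2 ^ lam) + 1)"
  shows "let p = r ^ (2 ^ lam) + 1;
             s = log 2 (real_of_int p);
             lam' = (LEAST k::nat. 2 powr real k \<ge> log 2 s)
         in \<exists>\<beta>::nat. (\<exists>k::nat. \<beta> = 2 ^ k) \<and> \<beta> \<ge> 1 \<and>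
              2 * real \<beta> * log 2 (real_of_int r) + real lam - log 2 (real \<beta>)
                \<le> 2 * \<gamma> lam' * 2 ^ lam'"
proof -
  define s where "s = log 2 (real_of_int (r ^ (2 ^ lam) + 1))"
  define l' where "l' = (LEAST k::nat. 2 powr real k \<ge> log 2 s)"
  define L where "L = log 2 (real lam)"
  define R where "R = log 2 (real_of_int r)"
  have lampos: "real lam \<ge> 6" using lam_ge by simp
  have glam: "\<gamma> lam \<ge> real lam" using gamma_ge lam_ge by simp
  have "2 powr real lam \<le> 2 powr \<gamma> lam" using glam by simp
  hence rlo: "2 powr real lam \<le> real_of_int r" using r_lo by linarith
  have rpos: "real_of_int r > 0" using rlo by (smt (verit) powr_gt_zero)
  have R_lo: "R \<ge> real lam"
    using rlo rpos unfolding R_def by (smt (verit) le_log_iff powr_gt_zero)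
  have "R \<le> log 2 (2 powr (2 * \<gamma> lam) * (1 + real lam ^ 2))"
    unfolding R_def using rpos r_hi by simp
  also have "\<dots> = 2 * \<gamma> lam + log 2 (1 + real lam ^ 2)"
    using lampos by (subst log_mult) (auto, smt (verit) zero_le_power2)
  finally have R_hi: "R \<le> 2 * \<gamma> lam + log 2 (1 + real lam ^ 2)" .
  have L_ge: "L \<ge> 5/2"
  proof -
    have e: "(2::real) powr (5/2) = 2 powr 2 * 2 powr (1/2)" using powr_add[of "2::real" 2 "1/2"] by simp
    have q: "sqrt 2 \<le> (3/2::real)" by (rule real_le_lsqrt) (auto simp: power2_eq_square)
    have "(2::real) powr (5/2) \<le> 6" unfolding e using q by (simp add: powr_half_sqrt)
    hence "(2::real) powr (5/2) \<le> real lam" using lampos by linarith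
    thus ?thesis unfolding L_def using lampos le_log_iff[of 2 "real lam" "5/2"] by simp
  qed
  have logsq: "log 2 (1 + real lam ^ 2) \<le> L^2"
  proof -
    have "log 2 (1 + real lam ^ 2) \<le> log 2 (2 * real lam ^ 2)"
      using lampos by (subst log_le_cancel_iff) (use mult_mono[of 1 "real lam" 1 "real lam"] in \<open>auto simp: power2_eq_square\<close>)
    also have "\<dots> = 1 + 2 * L" unfolding L_def using lampos
      by (simp add: log_mult log_nat_power)
    also have "\<dots> \<le> L^2" proof -
      have "5/2 * L \<le> L * L" using L_ge by (intro mult_right_mono) auto
      thus ?thesis using L_ge unfolding power2_eq_square by linarith
    qed
    finally show ?thesis .
  qed
  have rp: "real_of_int (r ^ (2 ^ lam) + 1) > real_of_int r ^ (2 ^ lam)" by simp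
  have s_lo: "s \<ge> 2 ^ lam * R"
  proof -
    have "s \<ge> log 2 (real_of_int r ^ (2 ^ lam))" unfolding s_def
      using rp rpos by (smt (verit) log_le_cancel_iff zero_less_power)
    also have "log 2 (real_of_int r ^ (2 ^ lam)) = 2 ^ lam * R"
      unfolding R_def using rpos by (simp add: log_nat_power)
    finally show ?thesis by simp
  qed
  have Rpos: "R > 0" using R_lo lampos by linarith
  have logs: "log 2 s \<ge> real lam + L"
  proof -
    have "log 2 s \<ge> log 2 (2 ^ lam * R)" using s_lo Rpos by (subst log_le_cancel_iff) (auto, smt (verit) zero_less_power zero_less_mult_iff)
    also have "log 2 (2 ^ lam * R) = real lam + log 2 R" using Rpos
      by (simp add: log_mult log_nat_power)
    finally have "log 2 s \<ge> real lam + log 2 R" .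
    moreover have "log 2 R \<ge> L" unfolding L_def using R_lo lampos by simp
    ultimately show ?thesis by linarith
  qed
  have ex: "\<exists>k::nat. 2 powr real k \<ge> log 2 s"
  proof -
    obtain k :: nat where "real k \<ge> log 2 s" using real_arch_simple by blast
    moreover have "2 powr real k \<ge> real k"
      by (metis of_nat_less_two_power powr_realpow less_imp_le zero_less_numeral)
    ultimately show ?thesis by (intro exI[of _ k]) linarith
  qed
  have l'_prop: "2 powr real l' \<ge> log 2 s" unfolding l'_def by (rule LeastI_ex[OF ex])
  have A: "2 powr real l' \<ge> real lam + L" using l'_prop logs by linarith
  have Lpos: "L > 0" using L_ge by linarith
  have l'L: "real l' \<ge> L"
  proof -
    have "2 powr real l' \<ge> real lam" using A Lpos by linarith
    thus ?thesis unfolding L_def using lampos log_le_iff[of 2 "real lam" "real l'"] by simp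
  qed
  have l'1: "l' \<ge> 1" using l'L Lpos by (cases l') auto
  have gl': "\<gamma> l' \<ge> real l'" using gamma_ge l'1 by simp
  have pw: "(2::real) ^ l' = 2 powr real l'" by (simp add: powr_realpow)
  have "2 * \<gamma> l' * 2 ^ l' \<ge> 2 * real l' * 2 powr real l'"
    using gl' pw by simp
  moreover have "2 * real l' * 2 powr real l' \<ge> 2 * L * (real lam + L)"
    using l'L A Lpos lampos by (intro mult_mono) auto
  moreover have "2 * R + real lam \<le> 2 * L * (real lam + L)"
    using R_hi gamma_lam logsq unfolding L_def[symmetric] by (simp add: power2_eq_square algebra_simps)
  ultimately have main: "2 * R + real lam \<le> 2 * \<gamma> l' * 2 ^ l'" by linarith
  show ?thesis unfolding Let_def s_def[symmetric] l'_def[symmetric]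
    by (rule exI[of _ 1]) (use main R_def exI[of "\<lambda>k. Suc 0 = 2 ^ k" 0] in simp)
qed

end
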